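(* Let $k,c,\epsilon>0$ be constants and let $p=\frac{1+\epsilon}{d}$. Then with high probability every subset $X\subseteq V(Q^d)$ of size $|X|\ge c\, n d^{-k}$ satisfies $|\partial_{e,p}(X)|\le |X|\log d$.
   Context: $Q^d$ denotes the $d$-dimensional hypercube: vertex set $\{0,1\}^d$, two vertices adjacent iff they differ in exactly one coordinate; $n:=2^d$. $Q^d_p$ denotes the random subgraph of $Q^d$ on the same vertex set obtained by retaining each edge of $Q^d$ independently with probability $p$. For $X\subseteq V(Q^d)$, $\partial_{e,p}(X)$ is the set of edges of $Q^d_p$ with one endpoint in $X$ and the other in $V(Q^d)\setminus X$. "With high probability" means with probability tending to one as $d\to\infty$. *)

theory Defs
  imports "HOL-Probability.Probability"
begin

text \<open>Vertices of Q^d: subsets of {0..<d} (identified with 0/1 vectors of length d).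
  Edges: unordered pairs {u,v} of vertices differing in exactly one coordinate.\<close>

definition cube_vertices :: "nat \<Rightarrow> nat set set" where
  "cube_vertices d = Pow {..<d}"

definition cube_edges :: "nat \<Rightarrow> nat set set set" where
  "cube_edges d = {{u, v} | u v. u \<in> cube_vertices d \<and> v \<in> cube_vertices d
                                 \<and> card (sym_diff u v) = 1}"

text \<open>Distribution of Q^d_p: each edge retained independently with probability p;
  a sample is the indicator function of retained edges (False outside the edge set).\<close>

definition random_cube :: "nat \<Rightarrow> real \<Rightarrow> (nat set set \<Rightarrow> bool) pmf" where
  "random_cube d p = Pi_pmf (cube_edges d) False (\<lambda>_. bernoulli_pmf p)"

definition edge_boundary :: "nat \<Rightarrow> (nat set set \<Rightarrow> bool) \<Rightarrow> nat set set \<Rightarrow> nat set set set" where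
  "edge_boundary d G X = {e \<in> cube_edges d. G e \<and> (\<exists>u\<in>e. u \<in> X) \<and> (\<exists>v\<in>e. v \<notin> X)}"

end

theory Submission
  imports Defs "HOL-Real_Asymp.Real_Asymp"
begin

lemma fact_lb: "real m ^ m \<le> exp (real m) * fact m"
proof -
  have "(\<lambda>n. real m ^ n /\<^sub>R fact n) sums exp (real m)" by (rule exp_converges)
  hence sm: "summable (\<lambda>n. real m ^ n /\<^sub>R fact n)" and eq: "exp (real m) = (\<Sum>n. real m ^ n /\<^sub>R fact n)"
    by (auto simp: sums_iff)
  have "sum (\<lambda>n. real m ^ n /\<^sub>R fact n) {m} \<le> (\<Sum>n. real m ^ n /\<^sub>R fact n)"
    by (rule sum_le_suminf[OF sm]) auto
  hence "real m ^ m / fact m \<le> exp (real m)" using eq by (simp add: divide_inverse mult.commute)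
  thus ?thesis by (simp add: divide_le_eq mult.commute)
qed

lemma choose_bound:
  assumes "s > 0"
  shows "real (n choose s) \<le> (exp 1 * real n / real s) ^ s"
proof -
  have a: "real (n choose s) * fact s \<le> real n ^ s"
    using binomial_fact_pow[of n s] by (metis of_nat_fact of_nat_le_iff of_nat_mult of_nat_power)
  have b: "real s ^ s \<le> exp 1 ^ s * fact s" using fact_lb[of s] exp_of_nat_mult[of s 1] by (metis mult.right_neutral of_nat_def)
  have fpos: "fact s > (0::real)" by simp
  have "real (n choose s) * real s ^ s \<le> real (n choose s) * (exp 1 ^ s * fact s)"
    by (intro mult_left_mono b) auto
  also have "\<dots> = exp 1 ^ s * (real (n choose s) * fact s)" by simp
  also have "\<dots> \<le> exp 1 ^ s * real n ^ s" by (intro mult_left_mono a) auto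
  finally have "real (n choose s) * real s ^ s \<le> exp 1 ^ s * real n ^ s" .
  moreover have "real s ^ s > 0" using assms by simp
  ultimately show ?thesis by (simp add: power_divide power_mult_distrib pos_le_divide_eq)
qed

lemma choose_p:
  assumes "p \<ge> 0"
  shows "real (N choose m) * p ^ m \<le> (real N * p) ^ m / fact m"
proof -
  have a: "real (N choose m) * fact m \<le> real N ^ m"
    using binomial_fact_pow[of N m] by (metis of_nat_fact of_nat_le_iff of_nat_mult of_nat_power)
  have "real (N choose m) * p ^ m * fact m \<le> real N ^ m * p ^ m"
    using mult_right_mono[OF a, of "p^m"] assms by (simp add: mult_ac)
  thus ?thesis by (simp add: pos_le_divide_eq power_mult_distrib)
qed

lemma finite_cube_edges: "finite (cube_edges d)"
proof -
  have "cube_edges d \<subseteq> Pow (cube_vertices d)" unfolding cube_edges_def by auto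
  moreover have "finite (cube_vertices d)" unfolding cube_vertices_def by simp
  ultimately show ?thesis by (meson finite_Pow_iff finite_subset)
qed

lemma prob_all:
  assumes "F \<subseteq> cube_edges d" "0 \<le> p" "p \<le> 1"
  shows "measure_pmf.prob (random_cube d p) {G. \<forall>e\<in>F. G e} = p ^ card F"
proof -
  have fin: "finite (cube_edges d)" by (rule finite_cube_edges)
  have "{G. \<forall>e\<in>F. G e} = Pi (cube_edges d) (\<lambda>e. if e \<in> F then {True} else UNIV)"
    using assms(1) by (auto simp: Pi_def)
  hence "measure_pmf.prob (random_cube d p) {G. \<forall>e\<in>F. G e}
     = (\<Prod>e\<in>cube_edges d. measure_pmf.prob (bernoulli_pmf p) (if e \<in> F then {True} else UNIV))"
    unfolding random_cube_def by (simp add: measure_Pi_pmf_Pi[OF fin])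
  also have "\<dots> = (\<Prod>e\<in>cube_edges d. if e \<in> F then p else 1)"
    by (intro prod.cong refl) (use assms in \<open>auto simp: measure_pmf_single\<close>)
  also have "\<dots> = p ^ card F"
    using prod.If_cases[OF fin, of "\<lambda>e. e \<in> F" "\<lambda>_. p" "\<lambda>_. 1"] assms(1)
    by (simp add: Int_absorb1)
  finally show ?thesis .
qed

lemma edges_at:
  assumes "u \<in> cube_vertices d"
  shows "card {e \<in> cube_edges d. u \<in> e} \<le> d"
proof -
  have "{e \<in> cube_edges d. u \<in> e} \<subseteq> (\<lambda>i. {u, sym_diff u {i}}) ` {..<d}"
  proof
    fix e assume e: "e \<in> {e \<in> cube_edges d. u \<in> e}"
    then obtain a b where ab: "e = {a, b}" "a \<in> cube_vertices d" "b \<in> cube_vertices d"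
      "card (sym_diff a b) = 1" unfolding cube_edges_def by auto
    then obtain i where i: "sym_diff a b = {i}" by (meson card_1_singletonE)
    have "i \<in> sym_diff a b" using i by auto
    hence "i < d" using ab(2,3) unfolding cube_vertices_def by auto
    have bb: "b = sym_diff a {i}" using i by blast
    have aa: "a = sym_diff b {i}" using i by blast
    show "e \<in> (\<lambda>i. {u, sym_diff u {i}}) ` {..<d}"
    proof (cases "u = a")
      case True
      thus ?thesis using ab bb \<open>i < d\<close> by auto
    next
      case False
      hence "u = b" using e ab by auto
      thus ?thesis using ab aa \<open>i < d\<close> by (intro image_eqI[of _ _ i]) auto
    qed
  qed
  hence "card {e \<in> cube_edges d. u \<in> e} \<le> card ((\<lambda>i. {u, sym_diff u {i}}) ` {..<d})"
    by (intro card_mono) auto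
  also have "\<dots> \<le> d" using card_image_le[of "{..<d}"] by simp
  finally show ?thesis .
qed

lemma boundary_card:
  assumes "X \<subseteq> cube_vertices d"
  shows "card (edge_boundary d (\<lambda>_. True) X) \<le> card X * d"
proof -
  have fX: "finite X" using assms unfolding cube_vertices_def by (meson finite_Pow_iff finite_lessThan finite_subset)
  have "edge_boundary d (\<lambda>_. True) X \<subseteq> (\<Union>u\<in>X. {e \<in> cube_edges d. u \<in> e})"
    unfolding edge_boundary_def by auto
  hence "card (edge_boundary d (\<lambda>_. True) X) \<le> card (\<Union>u\<in>X. {e \<in> cube_edges d. u \<in> e})"
    by (intro card_mono) (auto intro: finite_subset[OF _ finite_cube_edges] simp: fX)
  also have "\<dots> \<le> (\<Sum>u\<in>X. card {e \<in> cube_edges d. u \<in> e})" by (rule card_UN_le[OF fX])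
  also have "\<dots> \<le> (\<Sum>u\<in>X. d)" by (intro sum_mono edges_at) (use assms in auto)
  finally show ?thesis by simp
qed

lemma geo:
  fixes r :: real
  assumes "0 \<le> r" "r \<le> 1/2"
  shows "(\<Sum>s\<in>{1..n}. r ^ s) \<le> 2 * r - 2 * r ^ (n + 1)"
proof (induction n)
  case 0 then show ?case by simp
next
  case (Suc n)
  have "2 * r ^ (n + 2) \<le> r ^ (n + 1)"
    using mult_right_mono[of "2*r" 1 "r^(n+1)"] assms by (simp add: mult_ac)
  thus ?case using Suc by (simp add: sum.cl_ivl_Suc)
qed

lemma X_bound:
  fixes \<epsilon> L p q :: real
  assumes X: "X \<subseteq> cube_vertices d" and s: "s = card X" "s \<ge> 1" and L: "L = ln (real d)" "L > 0"
    and p: "p = (1 + \<epsilon>) / real d" and e: "\<epsilon> > 0"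
    and q: "q = exp 1 * (1 + \<epsilon>) / L" "q \<le> 1" and m: "m = nat \<lceil>real s * L\<rceil>"
  shows "real (card (edge_boundary d (\<lambda>_. True) X) choose m) * p ^ m \<le> exp (L * ln q) ^ s"
proof -
  define N where "N = card (edge_boundary d (\<lambda>_. True) X)"
  have Nle: "N \<le> s * d" unfolding N_def s using boundary_card[OF X] .
  have dpos: "real d > 0" using L by (cases "d = 0") auto
  have p0: "p \<ge> 0" using p e dpos by simp
  have msL: "real m \<ge> real s * L" using m by linarith
  have mpos: "m > 0" using msL s L
    by (metis le_less_trans mult_pos_pos of_nat_0 of_nat_0_less_iff of_nat_1 order_less_le_trans zero_less_one
      less_le_trans linorder_not_le nat_less_le)
  have qpos: "q > 0" using q L e by simp
  have "real (N choose m) * p ^ m \<le> (real N * p) ^ m / fact m" by (rule choose_p[OF p0])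
  also have "\<dots> \<le> (real s * (1 + \<epsilon>)) ^ m / fact m"
  proof -
    have "real N * p \<le> real (s * d) * p" using Nle p0 by (intro mult_right_mono) (simp only: of_nat_le_iff, simp)
    also have "\<dots> = real s * (1 + \<epsilon>)" using p dpos by simp
    finally show ?thesis using p0 by (intro divide_right_mono power_mono) auto
  qed
  also have "\<dots> \<le> (exp 1 * (1 + \<epsilon>) * real s / real m) ^ m"
  proof -
    have f: "real m ^ m \<le> exp 1 ^ m * fact m"
      using fact_lb[of m] exp_of_nat_mult[of m 1] by (metis mult.right_neutral of_nat_def)
    have mm: "real m ^ m > 0" using mpos by simp
    have "(real s * (1 + \<epsilon>)) ^ m * real m ^ m \<le> (real s * (1 + \<epsilon>)) ^ m * (exp 1 ^ m * fact m)"
      using f e by (intro mult_left_mono) auto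
    hence "(real s * (1 + \<epsilon>)) ^ m / fact m \<le> (real s * (1 + \<epsilon>)) ^ m * exp 1 ^ m / real m ^ m"
      using mm by (simp add: field_simps)
    thus ?thesis by (simp add: power_divide power_mult_distrib mult_ac)
  qed
  also have "\<dots> \<le> q ^ m"
  proof (intro power_mono)
    have "real s / real m \<le> 1 / L" using msL L mpos by (simp add: field_simps)
    hence "exp 1 * (1 + \<epsilon>) * (real s / real m) \<le> exp 1 * (1 + \<epsilon>) * (1 / L)"
      using e by (intro mult_left_mono) auto
    thus "exp 1 * (1 + \<epsilon>) * real s / real m \<le> q" using q by simp
  qed (use e in auto)
  also have "\<dots> = exp (real m * ln q)" using qpos by (simp add: exp_of_nat_mult)
  also have "\<dots> \<le> exp (real s * L * ln q)"
  proof -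
    have "ln q \<le> 0" using q qpos by simp
    thus ?thesis using msL by (intro exp_mono mult_right_mono_neg) auto
  qed
  also have "\<dots> = exp (L * ln q) ^ s" by (simp add: exp_of_nat_mult[symmetric] mult_ac)
  finally show ?thesis unfolding N_def .
qed

lemma main_d:
  fixes d :: nat and c k \<epsilon> L p q y r :: real
  assumes c: "c > 0" and e: "\<epsilon> > 0" and L: "L = ln (real d)" "L > 0"
    and p: "p = (1 + \<epsilon>) / real d" "p \<le> 1"
    and q: "q = exp 1 * (1 + \<epsilon>) / L" "q \<le> 1" and y: "y = exp (L * ln q)"
    and r: "r = exp 1 / c * real d powr k * y" "r \<le> 1/2"
  shows "1 - 2 * r \<le> measure_pmf.prob (random_cube d p)
            {G. \<forall>X. X \<subseteq> cube_vertices d \<and> real (card X) \<ge> c * 2 ^ d * real d powr (- k)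
                 \<longrightarrow> real (card (edge_boundary d G X)) \<le> real (card X) * ln (real d)}"
    (is "_ \<le> measure_pmf.prob _ ?good")
proof -
  define V where "V = cube_vertices d"
  define thr where "thr = c * 2 ^ d * real d powr (- k)"
  define XX where "XX = {X. X \<subseteq> V \<and> thr \<le> real (card X)}"
  define Bq where "Bq X = edge_boundary d (\<lambda>_. True) X" for X
  define m where "m X = nat \<lceil>real (card X) * L\<rceil>" for X :: "nat set set"
  define FF where "FF X = {F. F \<subseteq> Bq X \<and> card F = m X}" for X
  define Ev where "Ev F = {G. \<forall>e\<in>F. G e}" for F :: "nat set set set"
  define M where "M = random_cube d p"
  define U where "U = (\<Union>X\<in>XX. \<Union>F\<in>FF X. Ev F)"
  have dpos: "real d > 0" using L by (cases "d = 0") auto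
  have p0: "p \<ge> 0" using p e dpos by simp
  have finV: "finite V" unfolding V_def cube_vertices_def by simp
  have cardV: "card V = 2 ^ d" unfolding V_def cube_vertices_def by (simp add: card_Pow)
  have finXX: "finite XX" using finV unfolding XX_def by (auto intro: finite_subset[of _ "Pow V"])
  have BqE: "Bq X \<subseteq> cube_edges d" for X unfolding Bq_def edge_boundary_def by auto
  have finBq: "finite (Bq X)" for X using BqE finite_cube_edges by (rule finite_subset)
  have finFF: "finite (FF X)" for X unfolding FF_def using finBq[of X]
    by (auto intro: finite_subset[of _ "Pow (Bq X)"])
  have thrpos: "thr > 0" unfolding thr_def using c dpos by simp
  have cover: "UNIV - ?good \<subseteq> U"
  proof
    fix G assume "G \<in> UNIV - ?good"
    then obtain X where X: "X \<subseteq> V" "thr \<le> card X"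
       "real (card (edge_boundary d G X)) > real (card X) * L"
       unfolding V_def thr_def L by auto
    have "m X \<le> card (edge_boundary d G X)" unfolding m_def using X(3) by simp
    then obtain F where F: "F \<subseteq> edge_boundary d G X" "card F = m X"
      using obtain_subset_with_card_n by metis
    have "F \<in> FF X" using F unfolding FF_def Bq_def edge_boundary_def by auto
    moreover have "G \<in> Ev F" using F unfolding Ev_def edge_boundary_def by auto
    moreover have "X \<in> XX" using X unfolding XX_def by auto
    ultimately show "G \<in> U" unfolding U_def by blast
  qed
  have "measure M U \<le> (\<Sum>X\<in>XX. measure M (\<Union>F\<in>FF X. Ev F))"
    unfolding U_def by (rule measure_pmf.finite_measure_subadditive_finite) (auto simp: finXX)
  also have "\<dots> \<le> (\<Sum>X\<in>XX. \<Sum>F\<in>FF X. measure M (Ev F))"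
    by (intro sum_mono measure_pmf.finite_measure_subadditive_finite) (auto simp: finFF)
  also have "\<dots> = (\<Sum>X\<in>XX. real (card (Bq X) choose m X) * p ^ m X)"
  proof (intro sum.cong refl)
    fix X assume "X \<in> XX"
    have "(\<Sum>F\<in>FF X. measure M (Ev F)) = (\<Sum>F\<in>FF X. p ^ m X)"
    proof (intro sum.cong refl)
      fix F assume F: "F \<in> FF X"
      have "F \<subseteq> cube_edges d" using F BqE unfolding FF_def by auto
      thus "measure M (Ev F) = p ^ m X"
        using prob_all[of F d p] p p0 F unfolding M_def Ev_def FF_def by auto
    qed
    also have "\<dots> = real (card (FF X)) * p ^ m X" by simp
    also have "card (FF X) = card (Bq X) choose m X" unfolding FF_def by (rule n_subsets[OF finBq])
    finally show "(\<Sum>F\<in>FF X. measure M (Ev F)) = real (card (Bq X) choose m X) * p ^ m X" .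
  qed
  also have "\<dots> \<le> (\<Sum>X\<in>XX. y ^ card X)"
  proof (intro sum_mono)
    fix X assume X: "X \<in> XX"
    hence "real (card X) > 0" using thrpos unfolding XX_def by auto
    hence "card X \<ge> 1" by simp
    thus "real (card (Bq X) choose m X) * p ^ m X \<le> y ^ card X"
      unfolding Bq_def m_def y using X_bound[of X d "card X" L p \<epsilon> q "m X"] X L p e q
      unfolding XX_def V_def m_def by auto
  qed
  also have "\<dots> = (\<Sum>s\<in>card ` XX. \<Sum>X\<in>{X. X \<in> XX \<and> card X = s}. y ^ card X)"
    by (rule sum.image_gen[OF finXX])
  also have "\<dots> = (\<Sum>s\<in>card ` XX. real (card {X. X \<in> XX \<and> card X = s}) * y ^ s)"
    by (intro sum.cong refl) simp
  also have "\<dots> \<le> (\<Sum>s\<in>card ` XX. r ^ s)"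
  proof (intro sum_mono)
    fix s assume "s \<in> card ` XX"
    then obtain X0 where X0: "X0 \<in> XX" "s = card X0" by auto
    have sthr: "thr \<le> real s" using X0 unfolding XX_def by auto
    have spos: "s > 0" using sthr thrpos by simp
    have "card {X. X \<in> XX \<and> card X = s} \<le> card {X. X \<subseteq> V \<and> card X = s}"
      by (intro card_mono) (auto simp: XX_def finV intro: finite_subset[of _ "Pow V"])
    also have "\<dots> = 2 ^ d choose s" using n_subsets[OF finV] cardV by simp
    finally have c1: "real (card {X. X \<in> XX \<and> card X = s}) \<le> (exp 1 * real (2 ^ d) / real s) ^ s"
      using choose_bound[OF spos, of "2^d"] by (meson of_nat_le_iff order_trans)
    have ypos: "y > 0" using y by simp
    have key: "real (2 ^ d) / real s \<le> real d powr k / c"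
    proof -
      have "c * 2 ^ d = thr * real d powr k" unfolding thr_def using dpos
        by (simp add: powr_minus field_simps)
      also have "\<dots> \<le> real s * real d powr k" using sthr by (intro mult_right_mono) auto
      finally show ?thesis using spos c by (simp add: field_simps)
    qed
    have "real (card {X. X \<in> XX \<and> card X = s}) * y ^ s \<le> (exp 1 * real (2 ^ d) / real s) ^ s * y ^ s"
      using c1 ypos by (intro mult_right_mono) auto
    also have "\<dots> = (exp 1 * (real (2 ^ d) / real s) * y) ^ s" by (simp only: power_mult_distrib[symmetric] times_divide_eq_right)
    also have "\<dots> \<le> (exp 1 * (real d powr k / c) * y) ^ s"
      using key ypos by (intro power_mono mult_right_mono mult_left_mono) auto
    also have "\<dots> = r ^ s" using r by (simp add: mult_ac)
    finally show "real (card {X. X \<in> XX \<and> card X = s}) * y ^ s \<le> r ^ s" .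
  qed
  also have "\<dots> \<le> (\<Sum>s\<in>{1..2^d}. r ^ s)"
  proof (intro sum_mono2)
    show "card ` XX \<subseteq> {1..2^d}"
    proof
      fix s assume "s \<in> card ` XX"
      then obtain X0 where X0: "X0 \<in> XX" "s = card X0" by auto
      have "real s > 0" using X0 thrpos unfolding XX_def by auto
      moreover have "s \<le> 2 ^ d" using X0 card_mono[OF finV] cardV unfolding XX_def by auto
      ultimately show "s \<in> {1..2^d}" by auto
    qed
    show "\<And>b. b \<in> {1..2 ^ d} - card ` XX \<Longrightarrow> 0 \<le> r ^ b"
      using r c y by simp
  qed simp
  also have "\<dots> \<le> 2 * r - 2 * r ^ (2^d + 1)"
    by (rule geo) (use r c y in auto)
  also have "\<dots> \<le> 2 * r" using r c y by simp
  finally have hU: "measure M U \<le> 2 * r" .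
  have "measure M (UNIV - ?good) \<le> measure M U"
    using cover by (intro measure_pmf.finite_measure_mono) auto
  moreover have "measure M (UNIV - ?good) = 1 - measure M ?good"
    using measure_pmf.prob_compl[of ?good M] by simp
  ultimately show ?thesis using hU unfolding M_def by linarith
qed

lemma R_lim: "((\<lambda>x::real. exp 1 / c * exp (ln x * (k + a - ln (ln x)))) \<longlongrightarrow> 0) at_top"
  by real_asymp

lemma ev1: "eventually (\<lambda>x::real. exp 1 * (1+e) \<le> ln x) at_top"
  by real_asymp

lemma ev2: "eventually (\<lambda>x::real. (1+e) / x \<le> 1) at_top"
  by real_asymp

theorem lemma2p5:
  fixes k c \<epsilon> :: real
  assumes "k > 0" and "c > 0" and "\<epsilon> > 0"
  shows "(\<lambda>d::nat. measure_pmf.prob (random_cube d ((1 + \<epsilon>) / real d))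
            {G. \<forall>X. X \<subseteq> cube_vertices d \<and> real (card X) \<ge> c * 2 ^ d * real d powr (- k)
                 \<longrightarrow> real (card (edge_boundary d G X)) \<le> real (card X) * ln (real d)})
         \<longlonglongrightarrow> 1"
    (is "(\<lambda>d. ?P d) \<longlonglongrightarrow> 1")
proof -
  define a where "a = 1 + ln (1 + \<epsilon>)"
  define R where "R x = exp 1 / c * exp (ln x * (k + a - ln (ln x)))" for x :: real
  have Rlim: "(R \<longlongrightarrow> 0) at_top" unfolding R_def by (rule R_lim)
  have "\<forall>\<^sub>F x in at_top. R x < 1/2" using Rlim by (rule order_tendstoD) simp
  moreover have "\<forall>\<^sub>F x in at_top. (3::real) \<le> x" by (rule eventually_ge_at_top)
  ultimately have evr: "\<forall>\<^sub>F x in at_top. R x < 1/2 \<and> 3 \<le> x \<and> exp 1 * (1+\<epsilon>) \<le> ln x \<and> (1+\<epsilon>) / x \<le> 1"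
    using ev1[of \<epsilon>] ev2[of \<epsilon>] by eventually_elim auto
  have evn: "\<forall>\<^sub>F d in sequentially. R (real d) < 1/2 \<and> 3 \<le> real d \<and> exp 1 * (1+\<epsilon>) \<le> ln (real d)
      \<and> (1+\<epsilon>) / real d \<le> 1"
    using filterlim_real_sequentially evr unfolding filterlim_iff by blast
  have lower: "\<forall>\<^sub>F d in sequentially. 1 - 2 * R (real d) \<le> ?P d"
    using evn
  proof eventually_elim
    case (elim d)
    define L where "L = ln (real d)"
    define q where "q = exp 1 * (1 + \<epsilon>) / L"
    have dpos: "real d > 0" using elim by simp
    have Lpos: "L > 0" unfolding L_def using elim by simp
    have "q \<le> 1" unfolding q_def using elim Lpos by (simp add: L_def)
    have lnq: "ln q = a - ln L" unfolding q_def a_def using Lpos assms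
      by (simp add: ln_div ln_mult)
    have eqR: "exp 1 / c * real d powr k * exp (L * ln q) = R (real d)"
      unfolding R_def lnq using dpos
      by (simp add: powr_def L_def exp_add[symmetric] algebra_simps)
    show ?case
      by (rule main_d[OF assms(2) assms(3) L_def Lpos refl _ q_def \<open>q \<le> 1\<close> refl eqR[symmetric]])
         (use elim in auto)
  qed
  have upper: "\<forall>\<^sub>F d in sequentially. ?P d \<le> 1" by simp
  have "(\<lambda>d. 1 - 2 * R (real d)) \<longlonglongrightarrow> 1 - 2 * 0"
    by (intro tendsto_intros filterlim_compose[OF Rlim filterlim_real_sequentially])
  hence l1: "(\<lambda>d. 1 - 2 * R (real d)) \<longlonglongrightarrow> 1" by simp
  show ?thesis by (rule tendsto_sandwich[OF lower upper l1 tendsto_const])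
qed

end
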